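(* Let $D$ be a crossing optimal normalized 2-page book drawing of $K_n$. For each integer $j$ with $0\le j\le\lfloor n/2\rfloor-2$, let $D_j$ be the drawing of $K_{n-j}$ obtained from $D$ by deleting the $j$ rightmost vertices $n-j+1,\dots,n$ and their incident edges. Then \[ E_{\le\le k}(D_j)=3\binom{k+3}3\quad\text{for all }0\le k\le\lfloor n/2\rfloor-2-j. \]
   Context: Normalized 2-page book drawing of $K_n$: vertices $(1,0),\dots,(n,0)$ labelled $1,\dots,n$; edges $i(i+1)$ on the spine; edge $1n$ in the upper half-plane; every other edge $ij$ a semicircle over $[i,j]$ in the upper or lower half-plane. Crossing optimal: exactly $Z(n)=\frac14\lfloor\frac n2\rfloor\lfloor\frac{n-1}2\rfloor\lfloor\frac{n-2}2\rfloor\lfloor\frac{n-3}2\rfloor$ crossings. For a good drawing $D$ of $K_m$: for distinct vertices $p,q,r$, $r$ is on the left (right) of $\overrightarrow{pq}$ if the triangle with edges $pq,qr,rp$ traced in order $p,q,r$ is counterclockwise (clockwise); an edge is a $k$-edge if exactly $k$ of the other $m-2$ vertices lie on one side of it; each edge has a unique such index in $\{0,\dots,\lfloor m/2\rfloor-1\}$, $E_k(D)$ counts edges with index $k$, and $E_{\le\le k}(D)=\sum_{i=0}^k(k+1-i)E_i(D)$. *)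

theory Defs
  imports Complex_Main
begin

text \<open>A normalized 2-page book drawing of K_n is encoded combinatorially by a page
assignment pg :: nat => nat => bool: for vertices i < j with j \<ge> i + 2, the edge ij is a
semicircle over [i,j] in the upper half-plane if pg i j and in the lower half-plane
otherwise.  Spine edges i(i+1) do not depend on pg.\<close>

definition normalized :: "(nat \<Rightarrow> nat \<Rightarrow> bool) \<Rightarrow> nat \<Rightarrow> bool" where
  "normalized pg n \<longleftrightarrow> pg 1 n"

text \<open>Crossings: two non-spine edges ab and cd cross iff they lie on the same page and
their endpoints interleave, a < c < b < d (each crossing pair is counted once).\<close>

definition crossings :: "(nat \<Rightarrow> nat \<Rightarrow> bool) \<Rightarrow> nat \<Rightarrow> nat" where
  "crossings pg n = card {(a, b, c, d). 1 \<le> a \<and> a < c \<and> c < b \<and> b < d \<and> d \<le> n \<and> pg a b = pg c d}"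

definition Z :: "nat \<Rightarrow> real" where
  "Z n = (1/4) * real ((n div 2) * ((n - 1) div 2) * ((n - 2) div 2) * ((n - 3) div 2))"

definition crossing_optimal :: "(nat \<Rightarrow> nat \<Rightarrow> bool) \<Rightarrow> nat \<Rightarrow> bool" where
  "crossing_optimal pg n \<longleftrightarrow> real (crossings pg n) = Z n"

text \<open>Orientation of the triangle traced p, q, r (distinct vertices) in the drawing.
For sorted vertices a < b < c, the triangle traced a, b, c consists of the path a-b-c and the
arc ac spanning over it; it is counterclockwise iff ac is on the upper page.  Tracing in an
even (cyclic) order keeps the orientation, an odd order reverses it.\<close>

definition ccw :: "(nat \<Rightarrow> nat \<Rightarrow> bool) \<Rightarrow> nat \<Rightarrow> nat \<Rightarrow> nat \<Rightarrow> bool" where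
  "ccw pg p q r =
    (let lo = min p (min q r); hi = max p (max q r) in
     if (p < q \<and> q < r) \<or> (q < r \<and> r < p) \<or> (r < p \<and> p < q) then pg lo hi else \<not> pg lo hi)"

text \<open>Drawing D_j / of K_m on vertices 1..m (the sub-drawing induced by the first m vertices).\<close>

definition left_count :: "(nat \<Rightarrow> nat \<Rightarrow> bool) \<Rightarrow> nat \<Rightarrow> nat \<Rightarrow> nat \<Rightarrow> nat" where
  "left_count pg m p q = card {r \<in> {1..m}. r \<noteq> p \<and> r \<noteq> q \<and> ccw pg p q r}"

definition right_count :: "(nat \<Rightarrow> nat \<Rightarrow> bool) \<Rightarrow> nat \<Rightarrow> nat \<Rightarrow> nat \<Rightarrow> nat" where
  "right_count pg m p q = card {r \<in> {1..m}. r \<noteq> p \<and> r \<noteq> q \<and> \<not> ccw pg p q r}"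

definition is_k_edge :: "(nat \<Rightarrow> nat \<Rightarrow> bool) \<Rightarrow> nat \<Rightarrow> nat \<Rightarrow> nat \<Rightarrow> nat \<Rightarrow> bool" where
  "is_k_edge pg m k p q \<longleftrightarrow> left_count pg m p q = k \<or> right_count pg m p q = k"

definition E :: "(nat \<Rightarrow> nat \<Rightarrow> bool) \<Rightarrow> nat \<Rightarrow> nat \<Rightarrow> nat" where
  "E pg m k = card {(p, q). 1 \<le> p \<and> p < q \<and> q \<le> m \<and> is_k_edge pg m k p q}"

definition E_le_le :: "(nat \<Rightarrow> nat \<Rightarrow> bool) \<Rightarrow> nat \<Rightarrow> nat \<Rightarrow> nat" where
  "E_le_le pg m k = (\<Sum>i\<le>k. (k + 1 - i) * E pg m i)"

end

theory Submission
  imports Defs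
begin

definition Ls :: "(nat\<Rightarrow>nat\<Rightarrow>bool) \<Rightarrow> nat \<Rightarrow> nat \<Rightarrow> nat \<Rightarrow> nat \<Rightarrow> nat set" where
 "Ls pg a b p q = {r \<in> {a..b}. r \<noteq> p \<and> r \<noteq> q \<and> ccw pg p q r}"
definition Rs :: "(nat\<Rightarrow>nat\<Rightarrow>bool) \<Rightarrow> nat \<Rightarrow> nat \<Rightarrow> nat \<Rightarrow> nat \<Rightarrow> nat set" where
 "Rs pg a b p q = {r \<in> {a..b}. r \<noteq> p \<and> r \<noteq> q \<and> \<not> ccw pg p q r}"
definition Lc :: "(nat\<Rightarrow>nat\<Rightarrow>bool) \<Rightarrow> nat \<Rightarrow> nat \<Rightarrow> nat \<Rightarrow> nat \<Rightarrow> nat" where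
 "Lc pg a b p q = card (Ls pg a b p q)"
definition Rc :: "(nat\<Rightarrow>nat\<Rightarrow>bool) \<Rightarrow> nat \<Rightarrow> nat \<Rightarrow> nat \<Rightarrow> nat \<Rightarrow> nat" where
 "Rc pg a b p q = card (Rs pg a b p q)"
definition kap :: "(nat\<Rightarrow>nat\<Rightarrow>bool) \<Rightarrow> nat \<Rightarrow> nat \<Rightarrow> nat \<Rightarrow> nat \<Rightarrow> nat" where
 "kap pg a b p q = min (Lc pg a b p q) (Rc pg a b p q)"
definition edges :: "nat \<Rightarrow> nat \<Rightarrow> (nat \<times> nat) set" where
 "edges a b = {(p,q). a \<le> p \<and> p < q \<and> q \<le> b}"
definition T :: "(nat\<Rightarrow>nat\<Rightarrow>bool) \<Rightarrow> nat \<Rightarrow> nat \<Rightarrow> nat \<Rightarrow> nat" where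
 "T pg a b j = (\<Sum>(p,q)\<in>edges a b. j - kap pg a b p q)"

lemma finite_edges[simp]: "finite (edges a b)"
  by (rule finite_subset[of _ "{a..b}\<times>{a..b}"]) (auto simp: edges_def)

lemma LR_sum:
  assumes "a \<le> p" "p \<le> b" "a \<le> q" "q \<le> b" "p \<noteq> q"
  shows "Lc pg a b p q + Rc pg a b p q = b - a - 1"
proof -
  have "Ls pg a b p q \<union> Rs pg a b p q = {a..b} - {p,q}"
    by (auto simp: Ls_def Rs_def)
  moreover have "Ls pg a b p q \<inter> Rs pg a b p q = {}" by (auto simp: Ls_def Rs_def)
  moreover have "card ({a..b} - {p,q}) = b - a - 1"
    using assms by (subst card_Diff_subset) auto
  ultimately show ?thesis unfolding Lc_def Rc_def
    by (metis card_Un_disjoint finite_Diff finite_Un finite_atLeastAtMost)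
qed

lemma Ls_ext_right:
  assumes "a \<le> p" "p < q" "q \<le> b"
  shows "Lc pg a (Suc b) p q = Lc pg a b p q + (if ccw pg p q (Suc b) then 1 else 0)"
    and "Rc pg a (Suc b) p q = Rc pg a b p q + (if ccw pg p q (Suc b) then 0 else 1)"
proof -
  have e: "{a..Suc b} = insert (Suc b) {a..b}" using assms by auto
  have "Ls pg a (Suc b) p q = (if ccw pg p q (Suc b) then insert (Suc b) (Ls pg a b p q) else Ls pg a b p q)"
    using assms unfolding Ls_def e by auto
  then show "Lc pg a (Suc b) p q = Lc pg a b p q + (if ccw pg p q (Suc b) then 1 else 0)"
    unfolding Lc_def by (simp add: Ls_def)
  have "Rs pg a (Suc b) p q = (if ccw pg p q (Suc b) then Rs pg a b p q else insert (Suc b) (Rs pg a b p q))"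
    using assms unfolding Rs_def e by auto
  then show "Rc pg a (Suc b) p q = Rc pg a b p q + (if ccw pg p q (Suc b) then 0 else 1)"
    unfolding Rc_def by (simp add: Rs_def)
qed

lemma Ls_ext_left:
  assumes "Suc a \<le> p" "p < q" "q \<le> b"
  shows "Lc pg a b p q = Lc pg (Suc a) b p q + (if ccw pg p q a then 1 else 0)"
    and "Rc pg a b p q = Rc pg (Suc a) b p q + (if ccw pg p q a then 0 else 1)"
proof -
  have e: "{a..b} = insert a {Suc a..b}" using assms by auto
  have "Ls pg a b p q = (if ccw pg p q a then insert a (Ls pg (Suc a) b p q) else Ls pg (Suc a) b p q)"
    using assms unfolding Ls_def e by auto
  then show "Lc pg a b p q = Lc pg (Suc a) b p q + (if ccw pg p q a then 1 else 0)"
    unfolding Lc_def by (simp add: Ls_def)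
  have "Rs pg a b p q = (if ccw pg p q a then Rs pg (Suc a) b p q else insert a (Rs pg (Suc a) b p q))"
    using assms unfolding Rs_def e by auto
  then show "Rc pg a b p q = Rc pg (Suc a) b p q + (if ccw pg p q a then 0 else 1)"
    unfolding Rc_def by (simp add: Rs_def)
qed

lemma Ls_rightmost:
  assumes "a \<le> p" "p \<le> b"
  shows "Ls pg a (Suc b) p (Suc b) = {r \<in> {a..<p}. pg r (Suc b)} \<union> (if pg p (Suc b) then {} else {p<..<Suc b})"
  using assms unfolding Ls_def ccw_def by (auto simp: Let_def min_def max_def)

lemma Ls_leftmost:
  assumes "a < q" "q \<le> b"
  shows "Ls pg a b a q = (if pg a q then {} else {a<..<q}) \<union> {r \<in> {q<..b}. pg a r}"
  using assms unfolding Ls_def ccw_def by (auto simp: Let_def min_def max_def)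


lemma card_split: "finite S \<Longrightarrow> card {r\<in>S. P r} + card {r\<in>S. \<not>P r} = card S"
proof -
  assume f: "finite S"
  have "{r\<in>S. P r} \<union> {r\<in>S. \<not>P r} = S" by auto
  then show ?thesis using f by (metis (no_types, lifting) card_Un_disjoint disjoint_iff finite_Un mem_Collect_eq)
qed

lemma key_inj:
  fixes U :: "nat \<Rightarrow> bool"
  assumes "finite W'" "W \<union> {x} \<subseteq> W'" "x \<notin> W" "card W' \<le> N"
  shows "(if U x then card {r\<in>W. U r} else N - card {r\<in>W. \<not>U r}) \<noteq>
         (if U y then card {r\<in>W'. U r} else N - card {r\<in>W'. \<not> U r})"
proof -
  have fW: "finite W" using assms(1,2) finite_subset by auto
  have s1: "card {r\<in>W'. U r} + card {r\<in>W'. \<not>U r} = card W'"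
    using assms(1) by (rule card_split)
  have A: "U x \<Longrightarrow> card {r\<in>W. U r} + 1 \<le> card {r\<in>W'. U r}"
  proof -
    assume "U x"
    have "insert x {r\<in>W. U r} \<subseteq> {r\<in>W'. U r}" using assms \<open>U x\<close> by auto
    from card_mono[OF _ this] assms fW show ?thesis by auto
  qed
  have B: "\<not> U x \<Longrightarrow> card {r\<in>W. \<not>U r} + 1 \<le> card {r\<in>W'. \<not>U r}"
  proof -
    assume "\<not>U x"
    have "insert x {r\<in>W. \<not>U r} \<subseteq> {r\<in>W'. \<not>U r}" using assms \<open>\<not>U x\<close> by auto
    from card_mono[OF _ this] assms fW show ?thesis by auto
  qed
  show ?thesis using A B s1 assms(4) by auto
qed

lemma Lc_rightmost:
  assumes "a \<le> p" "p \<le> b"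
  shows "Lc pg a (Suc b) p (Suc b) = (if pg p (Suc b) then card {r\<in>{a..<p}. pg r (Suc b)}
           else (b - a) - card {r\<in>{a..<p}. \<not> pg r (Suc b)})"
proof -
  have s1: "card {r\<in>{a..<p}. pg r (Suc b)} + card {r\<in>{a..<p}. \<not> pg r (Suc b)} = p - a"
    using card_split[of "{a..<p}"] by simp
  have "Lc pg a (Suc b) p (Suc b) = card {r\<in>{a..<p}. pg r (Suc b)} + (if pg p (Suc b) then 0 else b - p)"
    unfolding Lc_def Ls_rightmost[OF assms] by (subst card_Un_disjoint) auto
  then show ?thesis using s1 assms by auto
qed

lemma Lc_leftmost:
  assumes "a < q" "q \<le> b"
  shows "Lc pg a b a q = (if pg a q then card {r\<in>{q<..b}. pg a r}
           else (b - a - 1) - card {r\<in>{q<..b}. \<not> pg a r})"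
proof -
  have s1: "card {r\<in>{q<..b}. pg a r} + card {r\<in>{q<..b}. \<not> pg a r} = b - q"
    using card_split[of "{q<..b}"] by simp
  have "Lc pg a b a q = (if pg a q then 0 else q - a - 1) + card {r\<in>{q<..b}. pg a r}"
    unfolding Lc_def Ls_leftmost[OF assms] by (subst card_Un_disjoint) auto
  then show ?thesis using s1 assms by auto
qed

lemma bij_rightmost:
  assumes "a \<le> b"
  shows "bij_betw (\<lambda>p. Lc pg a (Suc b) p (Suc b)) {a..b} {0..b-a}"
proof -
  let ?f = "\<lambda>p. Lc pg a (Suc b) p (Suc b)"
  have inj: "inj_on ?f {a..b}"
  proof (rule inj_onI, rule ccontr)
    fix x y assume x: "x \<in> {a..b}" and y: "y \<in> {a..b}" and e: "?f x = ?f y" and ne: "x \<noteq> y"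
    have gen: "?f u \<noteq> ?f v" if "u \<in> {a..b}" "v \<in> {a..b}" "u < v" for u v
    proof -
      have "(if pg u (Suc b) then card {r\<in>{a..<u}. pg r (Suc b)} else (b-a) - card {r\<in>{a..<u}. \<not> pg r (Suc b)}) \<noteq>
         (if pg v (Suc b) then card {r\<in>{a..<v}. pg r (Suc b)} else (b-a) - card {r\<in>{a..<v}. \<not> pg r (Suc b)})"
        by (rule key_inj[where U="\<lambda>r. pg r (Suc b)"]) (use that in auto)
      then show ?thesis using that by (simp add: Lc_rightmost)
    qed
    show False using ne gen[OF x y] gen[OF y x] e by (cases "x < y") auto
  qed
  have sub: "?f ` {a..b} \<subseteq> {0..b-a}"
  proof
    fix z assume "z \<in> ?f ` {a..b}"
    then obtain p where p: "p \<in> {a..b}" "z = ?f p" by auto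
    have "Lc pg a (Suc b) p (Suc b) + Rc pg a (Suc b) p (Suc b) = Suc b - a - 1"
      using p assms by (intro LR_sum) auto
    then show "z \<in> {0..b-a}" using p by auto
  qed
  have "card (?f ` {a..b}) = card {0..b-a}" using inj assms by (simp add: card_image)
  then have "?f ` {a..b} = {0..b-a}" using sub by (intro card_subset_eq) auto
  then show ?thesis using inj by (simp add: bij_betw_def)
qed

lemma bij_leftmost:
  assumes "a < b"
  shows "bij_betw (\<lambda>q. Lc pg a b a q) {Suc a..b} {0..b-a-1}"
proof -
  let ?f = "\<lambda>q. Lc pg a b a q"
  have inj: "inj_on ?f {Suc a..b}"
  proof (rule inj_onI, rule ccontr)
    fix x y assume x: "x \<in> {Suc a..b}" and y: "y \<in> {Suc a..b}" and e: "?f x = ?f y" and ne: "x \<noteq> y"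
    have gen: "?f u \<noteq> ?f v" if "u \<in> {Suc a..b}" "v \<in> {Suc a..b}" "v < u" for u v
    proof -
      have "(if pg a u then card {r\<in>{u<..b}. pg a r} else (b-a-1) - card {r\<in>{u<..b}. \<not> pg a r}) \<noteq>
         (if pg a v then card {r\<in>{v<..b}. pg a r} else (b-a-1) - card {r\<in>{v<..b}. \<not> pg a r})"
        by (rule key_inj[where U="\<lambda>r. pg a r"]) (use that in auto)
      then show ?thesis using that by (simp add: Lc_leftmost)
    qed
    show False using ne gen[OF x y] gen[OF y x] e by (cases "x < y") auto
  qed
  have sub: "?f ` {Suc a..b} \<subseteq> {0..b-a-1}"
  proof
    fix z assume "z \<in> ?f ` {Suc a..b}"
    then obtain p where p: "p \<in> {Suc a..b}" "z = ?f p" by auto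
    have "Lc pg a b a p + Rc pg a b a p = b - a - 1"
      using p assms by (intro LR_sum) auto
    then show "z \<in> {0..b-a-1}" using p by auto
  qed
  have "card (?f ` {Suc a..b}) = card {0..b-a-1}" using inj assms by (simp add: card_image)
  then have "?f ` {Suc a..b} = {0..b-a-1}" using sub by (intro card_subset_eq) auto
  then show ?thesis using inj by (simp add: bij_betw_def)
qed


lemma tri_sum: "2 * (\<Sum>i\<le>k. Suc k - i) = (k+1)*(k+2)"
proof (induction k)
  case 0 then show ?case by simp
next
  case (Suc k)
  have "(\<Sum>i\<le>Suc k. Suc (Suc k) - i) = Suc (Suc k) + (\<Sum>i\<le>k. Suc (Suc k) - Suc i)"
    by (subst sum.atMost_Suc_shift) simp
  also have "\<dots> = Suc (Suc k) + (\<Sum>i\<le>k. Suc k - i)" by simp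
  finally show ?case using Suc by simp
qed

lemma tri_sum2: assumes "k \<le> N" shows "2 * (\<Sum>i\<in>{0..N}. Suc k - i) = (k+1)*(k+2)"
proof -
  have "(\<Sum>i\<in>{0..N}. Suc k - i) = (\<Sum>i\<in>{0..k}. Suc k - i)"
    by (rule sum.mono_neutral_right) (use assms in auto)
  then show ?thesis using tri_sum[of k] by (simp add: atLeast0AtMost)
qed

lemma Ysum: assumes "2*k+1 \<le> N"
  shows "(\<Sum>i\<in>{0..N}. Suc k - min i (N-i)) = (k+1)*(k+2)"
proof -
  have "(\<Sum>i\<in>{0..N}. Suc k - min i (N-i)) = (\<Sum>i\<in>{0..N}. (Suc k - i) + (Suc k - (N - i)))"
    by (rule sum.cong) (use assms in auto)
  also have "\<dots> = (\<Sum>i\<in>{0..N}. Suc k - i) + (\<Sum>i\<in>{0..N}. Suc k - (N - i))"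
    by (rule sum.distrib)
  also have "(\<Sum>i\<in>{0..N}. Suc k - (N - i)) = (\<Sum>i\<in>{0..N}. Suc k - i)"
    by (subst sum.atLeastAtMost_rev) simp
  finally show ?thesis using tri_sum2[of k N] assms by simp
qed

lemma edges_Suc: "edges a (Suc b) = edges a b \<union> (\<lambda>p. (p, Suc b)) ` {a..b}"
  by (auto simp: edges_def)

definition Xs :: "(nat\<Rightarrow>nat\<Rightarrow>bool) \<Rightarrow> nat \<Rightarrow> nat \<Rightarrow> nat \<Rightarrow> (nat\<times>nat) set" where
  "Xs pg a b k = {(p,q)\<in>edges a b. kap pg a (Suc b) p q = kap pg a b p q \<and> kap pg a b p q \<le> k}"

lemma kap_step:
  assumes "a \<le> p" "p < q" "q \<le> b"
  shows "Suc k - kap pg a (Suc b) p q = (k - kap pg a b p q) +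
     (if kap pg a (Suc b) p q = kap pg a b p q \<and> kap pg a b p q \<le> k then 1 else 0)"
  using Ls_ext_right[OF assms, of pg] unfolding kap_def by (auto split: if_splits)

lemma Y_value:
  assumes "a \<le> b" "2*k+1 \<le> b - a"
  shows "(\<Sum>p\<in>{a..b}. Suc k - kap pg a (Suc b) p (Suc b)) = (k+1)*(k+2)"
proof -
  have "(\<Sum>p\<in>{a..b}. Suc k - kap pg a (Suc b) p (Suc b)) =
        (\<Sum>p\<in>{a..b}. (\<lambda>i. Suc k - min i (b-a-i)) (Lc pg a (Suc b) p (Suc b)))"
  proof (rule sum.cong)
    fix p assume p: "p \<in> {a..b}"
    have "Lc pg a (Suc b) p (Suc b) + Rc pg a (Suc b) p (Suc b) = Suc b - a - 1"
      using p assms by (intro LR_sum) auto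
    then show "Suc k - kap pg a (Suc b) p (Suc b) = (\<lambda>i. Suc k - min i (b-a-i)) (Lc pg a (Suc b) p (Suc b))"
      unfolding kap_def by simp
  qed simp
  also have "\<dots> = (\<Sum>i\<in>{0..b-a}. Suc k - min i (b-a-i))"
    by (rule sum.reindex_bij_betw[OF bij_rightmost[OF assms(1)]])
  also have "\<dots> = (k+1)*(k+2)" by (rule Ysum) (use assms in auto)
  finally show ?thesis .
qed

lemma decomp:
  assumes "a \<le> b" "2*k+1 \<le> b - a"
  shows "T pg a (Suc b) (Suc k) = T pg a b k + card (Xs pg a b k) + (k+1)*(k+2)"
proof -
  have disj: "edges a b \<inter> (\<lambda>p. (p, Suc b)) ` {a..b} = {}" by (auto simp: edges_def)
  have "T pg a (Suc b) (Suc k) = (\<Sum>(p,q)\<in>edges a b. Suc k - kap pg a (Suc b) p q)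
      + (\<Sum>(p,q)\<in>(\<lambda>p. (p, Suc b)) ` {a..b}. Suc k - kap pg a (Suc b) p q)"
    unfolding T_def edges_Suc by (rule sum.union_disjoint) (use disj in auto)
  also have "(\<Sum>(p,q)\<in>(\<lambda>p. (p, Suc b)) ` {a..b}. Suc k - kap pg a (Suc b) p q)
      = (\<Sum>p\<in>{a..b}. Suc k - kap pg a (Suc b) p (Suc b))"
    by (subst sum.reindex) (auto simp: inj_on_def)
  also have "\<dots> = (k+1)*(k+2)" by (rule Y_value[OF assms])
  also have "(\<Sum>(p,q)\<in>edges a b. Suc k - kap pg a (Suc b) p q)
     = (\<Sum>(p,q)\<in>edges a b. (k - kap pg a b p q) +
     (if kap pg a (Suc b) p q = kap pg a b p q \<and> kap pg a b p q \<le> k then 1 else 0))"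
    by (rule sum.cong) (auto simp: edges_def kap_step)
  also have "\<dots> = T pg a b k + card (Xs pg a b k)"
  proof -
    have c: "(\<Sum>(p,q)\<in>edges a b. (if kap pg a (Suc b) p q = kap pg a b p q \<and> kap pg a b p q \<le> k then 1 else 0::nat))
       = card (Xs pg a b k)"
    proof -
      have "Xs pg a b k = {x\<in>edges a b. (\<lambda>(p,q). kap pg a (Suc b) p q = kap pg a b p q \<and> kap pg a b p q \<le> k) x}"
        unfolding Xs_def by auto
      then show ?thesis by (simp add: sum.If_cases case_prod_beta Int_def conj_commute)
    qed
    show ?thesis unfolding T_def sum.distrib[symmetric] c[symmetric]
      by (simp add: case_prod_beta)
  qed
  finally show ?thesis .
qed


lemma ccw_ord: "p < q \<Longrightarrow> q < r \<Longrightarrow> ccw pg p q r = pg p r"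
  unfolding ccw_def by (simp add: Let_def min_def max_def)

lemma card_bij_pre:
  assumes "bij_betw f A B" "J \<subseteq> B"
  shows "card {x\<in>A. f x \<in> J} = card J"
proof -
  have "f ` {x\<in>A. f x \<in> J} = J" using assms unfolding bij_betw_def by auto
  moreover have "inj_on f {x\<in>A. f x \<in> J}" using assms unfolding bij_betw_def by (auto intro: inj_on_subset)
  ultimately show ?thesis by (metis card_image)
qed

lemma arith_shift:
  fixes l r x y N k :: nat
  assumes "l + r + 1 = N" "x \<le> 1" "y \<le> 1" "2*(Suc k) \<le> N"
    "min (l + x) (r + (1 - x)) = min l r" "min l r \<le> k"
  shows "min (l + y + x) (r + (1-y) + (1-x)) = min (l + y) (r + (1-y)) \<and> min (l + y) (r + (1-y)) \<le> Suc k"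
proof -
  have "x = 0 \<or> x = 1" "y = 0 \<or> y = 1" using assms by auto
  then show ?thesis using assms by (elim disjE) (auto simp: min_def split: if_splits)
qed

lemma X_bound:
  assumes "a \<le> b" "2*k+1 \<le> b - a"
  shows "(k+1)*(k+2) \<le> 2 * card (Xs pg a b k)"
  using assms
proof (induction k arbitrary: a)
  case 0
  let ?N = "b - a - 1"
  let ?J = "if pg a (Suc b) then {?N} else {0::nat}"
  let ?f = "\<lambda>q. Lc pg a b a q"
  have ab: "a < b" using 0 by auto
  have "card {q\<in>{Suc a..b}. ?f q \<in> ?J} = card ?J"
    by (rule card_bij_pre[OF bij_leftmost[OF ab]]) auto
  then have c1: "card {q\<in>{Suc a..b}. ?f q \<in> ?J} = 1" by simp
  have sub: "(\<lambda>q. (a,q)) ` {q\<in>{Suc a..b}. ?f q \<in> ?J} \<subseteq> Xs pg a b 0"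
  proof
    fix e assume "e \<in> (\<lambda>q. (a,q)) ` {q\<in>{Suc a..b}. ?f q \<in> ?J}"
    then obtain q where q: "q \<in> {Suc a..b}" "?f q \<in> ?J" and e: "e = (a,q)" by auto
    have s: "Lc pg a b a q + Rc pg a b a q = b - a - 1" using q by (intro LR_sum) auto
    have x: "ccw pg a q (Suc b) = pg a (Suc b)" using q by (intro ccw_ord) auto
    show "e \<in> Xs pg a b 0"
      using q s x Ls_ext_right[of a a q b pg] unfolding e Xs_def edges_def kap_def
      by (auto split: if_splits)
  qed
  have "card ((\<lambda>q. (a,q)) ` {q\<in>{Suc a..b}. ?f q \<in> ?J}) = 1"
    using c1 by (subst card_image) (auto simp: inj_on_def)
  moreover have "finite (Xs pg a b 0)" unfolding Xs_def by (rule finite_subset[OF _ finite_edges[of a b]]) auto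
  ultimately have "1 \<le> card (Xs pg a b 0)" using card_mono[OF _ sub] by auto
  then show ?case by simp
next
  case (Suc k)
  let ?N = "b - a - 1"
  let ?J = "if pg a (Suc b) then (\<lambda>i. ?N - i) ` {0..Suc k} else {0..Suc k}"
  let ?f = "\<lambda>q. Lc pg a b a q"
  have ab: "a < b" using Suc by auto
  have cJ: "card ?J = k + 2"
  proof (cases "pg a (Suc b)")
    case True
    have "inj_on (\<lambda>i. ?N - i) {0..Suc k}" using Suc.prems by (auto simp: inj_on_def)
    then show ?thesis using True by (simp add: card_image)
  qed simp
  have "card {q\<in>{Suc a..b}. ?f q \<in> ?J} = card ?J"
    by (rule card_bij_pre[OF bij_leftmost[OF ab]]) (use Suc.prems in auto)
  then have c1: "card {q\<in>{Suc a..b}. ?f q \<in> ?J} = k+2" using cJ by simp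
  let ?Xa = "(\<lambda>q. (a,q)) ` {q\<in>{Suc a..b}. ?f q \<in> ?J}"
  have sub: "?Xa \<subseteq> Xs pg a b (Suc k)"
  proof
    fix e assume "e \<in> ?Xa"
    then obtain q where q: "q \<in> {Suc a..b}" "?f q \<in> ?J" and e: "e = (a,q)" by auto
    have s: "Lc pg a b a q + Rc pg a b a q = b - a - 1" using q by (intro LR_sum) auto
    have x: "ccw pg a q (Suc b) = pg a (Suc b)" using q by (intro ccw_ord) auto
    show "e \<in> Xs pg a b (Suc k)"
      using q s x Ls_ext_right[of a a q b pg] Suc.prems unfolding e Xs_def edges_def kap_def
      by (auto split: if_splits)
  qed
  have cXa: "card ?Xa = k+2"
    using c1 by (subst card_image) (auto simp: inj_on_def)
  have sub2: "Xs pg (Suc a) b k \<subseteq> Xs pg a b (Suc k)"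
  proof
    fix e assume e: "e \<in> Xs pg (Suc a) b k"
    then obtain p q where pq: "e = (p,q)" "Suc a \<le> p" "p < q" "q \<le> b"
      and eq: "kap pg (Suc a) (Suc b) p q = kap pg (Suc a) b p q" "kap pg (Suc a) b p q \<le> k"
      unfolding Xs_def edges_def by auto
    define l where "l = Lc pg (Suc a) b p q"
    define r where "r = Rc pg (Suc a) b p q"
    define x where "x = (if ccw pg p q (Suc b) then 1 else 0::nat)"
    define y where "y = (if ccw pg p q a then 1 else 0::nat)"
    have lr: "l + r + 1 = b - a - 1" unfolding l_def r_def
      using LR_sum[of "Suc a" p b q pg] pq Suc.prems by auto
    have k1: "Lc pg (Suc a) (Suc b) p q = l + x" "Rc pg (Suc a) (Suc b) p q = r + (1 - x)"
      using Ls_ext_right[of "Suc a" p q b pg] pq unfolding l_def r_def x_def by auto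
    have k2: "Lc pg a b p q = l + y" "Rc pg a b p q = r + (1 - y)"
      using Ls_ext_left[of a p q b pg] pq unfolding l_def r_def y_def by auto
    have k3: "Lc pg a (Suc b) p q = l + y + x" "Rc pg a (Suc b) p q = r + (1 - y) + (1 - x)"
      using Ls_ext_left[of a p q "Suc b" pg] k1 pq unfolding y_def by auto
    have "min (l + y + x) (r + (1-y) + (1-x)) = min (l + y) (r + (1-y)) \<and> min (l + y) (r + (1-y)) \<le> Suc k"
      by (rule arith_shift[of l r "b-a-1" x y k])
         (use lr Suc.prems eq k1 in \<open>auto simp: kap_def l_def r_def x_def y_def\<close>)
    then show "e \<in> Xs pg a b (Suc k)" using pq k2 k3 unfolding Xs_def edges_def kap_def by auto
  qed
  have disj: "?Xa \<inter> Xs pg (Suc a) b k = {}" by (auto simp: Xs_def edges_def)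
  have fin: "finite (Xs pg a b (Suc k))" unfolding Xs_def by (rule finite_subset[OF _ finite_edges[of a b]]) auto
  have "card (?Xa \<union> Xs pg (Suc a) b k) \<le> card (Xs pg a b (Suc k))"
    using sub sub2 fin by (intro card_mono) auto
  moreover have "card (?Xa \<union> Xs pg (Suc a) b k) = card ?Xa + card (Xs pg (Suc a) b k)"
    using disj fin sub sub2 by (intro card_Un_disjoint) (auto intro: finite_subset)
  moreover have "(k+1)*(k+2) \<le> 2 * card (Xs pg (Suc a) b k)"
    using Suc.IH[of "Suc a"] Suc.prems by auto
  ultimately show ?case using cXa by (simp add: algebra_simps)
qed


lemma lower_bound:
  assumes "a \<le> b" "2*k+3 \<le> b - a"
  shows "(k+1)*(k+2)*(k+3) \<le> 2 * T pg a b (Suc k)"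
  using assms
proof (induction k arbitrary: b)
  case 0
  obtain b' where b: "b = Suc b'" using 0 by (cases b) auto
  have d: "T pg a b (Suc 0) = T pg a b' 0 + card (Xs pg a b' 0) + (0+1)*(0+2)"
    unfolding b by (rule decomp) (use 0 b in auto)
  have "(0+1)*(0+2) \<le> 2 * card (Xs pg a b' 0)" by (rule X_bound) (use 0 b in auto)
  then show ?case using d by simp
next
  case (Suc k)
  obtain b' where b: "b = Suc b'" using Suc by (cases b) auto
  have d: "T pg a b (Suc (Suc k)) = T pg a b' (Suc k) + card (Xs pg a b' (Suc k)) + (Suc k+1)*(Suc k+2)"
    unfolding b by (rule decomp) (use Suc b in auto)
  have x: "(Suc k+1)*(Suc k+2) \<le> 2 * card (Xs pg a b' (Suc k))" by (rule X_bound) (use Suc b in auto)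
  have ih: "(k+1)*(k+2)*(k+3) \<le> 2 * T pg a b' (Suc k)" by (rule Suc.IH) (use Suc b in auto)
  have e: "(Suc k+1)*(Suc k+2)*(Suc k+3) = (k+1)*(k+2)*(k+3) + 3*((Suc k+1)*(Suc k+2))"
    by (simp add: algebra_simps)
  show ?case using d x ih e by linarith
qed

lemma chain:
  assumes H: "\<And>k. k + 2 \<le> n div 2 \<Longrightarrow> 2 * T pg 1 n (Suc k) = (k+1)*(k+2)*(k+3)"
  shows "j + k + 2 \<le> n div 2 \<Longrightarrow> 2 * T pg 1 (n-j) (Suc k) = (k+1)*(k+2)*(k+3)"
proof (induction j arbitrary: k)
  case 0 then show ?case using H by simp
next
  case (Suc j)
  have nj: "n - j = Suc (n - Suc j)" using Suc.prems by auto
  have d: "T pg 1 (n-j) (Suc (Suc k)) = T pg 1 (n - Suc j) (Suc k) + card (Xs pg 1 (n - Suc j) (Suc k)) + (Suc k+1)*(Suc k+2)"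
    unfolding nj by (rule decomp) (use Suc.prems in auto)
  have x: "(Suc k+1)*(Suc k+2) \<le> 2 * card (Xs pg 1 (n - Suc j) (Suc k))" by (rule X_bound) (use Suc.prems in auto)
  have ih: "2 * T pg 1 (n-j) (Suc (Suc k)) = (Suc k+1)*(Suc k+2)*(Suc k+3)" by (rule Suc.IH) (use Suc.prems in auto)
  have lo: "(k+1)*(k+2)*(k+3) \<le> 2 * T pg 1 (n - Suc j) (Suc k)" by (rule lower_bound) (use Suc.prems in auto)
  have e: "(Suc k+1)*(Suc k+2)*(Suc k+3) = (k+1)*(k+2)*(k+3) + 3*((Suc k+1)*(Suc k+2))"
    by (simp add: algebra_simps)
  show ?case using d x ih e lo by linarith
qed

lemma EL_T:
  assumes "2*k+2 \<le> m"
  shows "E_le_le pg m k = T pg 1 m (Suc k)"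
proof -
  have lc: "left_count pg m = Lc pg 1 m" "right_count pg m = Rc pg 1 m"
    by (auto simp: fun_eq_iff left_count_def right_count_def Lc_def Rc_def Ls_def Rs_def)
  have Ei: "E pg m i = card {e\<in>edges 1 m. kap pg 1 m (fst e) (snd e) = i}" if "i \<le> k" for i
  proof -
    have "{(p, q). 1 \<le> p \<and> p < q \<and> q \<le> m \<and> is_k_edge pg m i p q} = {e\<in>edges 1 m. kap pg 1 m (fst e) (snd e) = i}"
    proof (rule set_eqI, clarify)
      fix p q
      show "((p,q) \<in> {(p, q). 1 \<le> p \<and> p < q \<and> q \<le> m \<and> is_k_edge pg m i p q}) =
            ((p,q) \<in> {e\<in>edges 1 m. kap pg 1 m (fst e) (snd e) = i})"
      proof (cases "1 \<le> p \<and> p < q \<and> q \<le> m")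
        case True
        have "Lc pg 1 m p q + Rc pg 1 m p q = m - 1 - 1" using True by (intro LR_sum) auto
        then show ?thesis using True that assms
          by (auto simp: edges_def is_k_edge_def lc kap_def min_def)
      qed (auto simp: edges_def)
    qed
    then show ?thesis unfolding E_def by simp
  qed
  have "E_le_le pg m k = (\<Sum>i\<le>k. \<Sum>e\<in>edges 1 m. if kap pg 1 m (fst e) (snd e) = i then k + 1 - i else 0)"
    unfolding E_le_le_def
  proof (rule sum.cong)
    fix i assume "i \<in> {..k}"
    then show "(k + 1 - i) * E pg m i = (\<Sum>e\<in>edges 1 m. if kap pg 1 m (fst e) (snd e) = i then k + 1 - i else 0)"
      using Ei[of i] by (simp add: sum.If_cases Int_def)
  qed simp
  also have "\<dots> = (\<Sum>e\<in>edges 1 m. \<Sum>i\<le>k. if kap pg 1 m (fst e) (snd e) = i then k + 1 - i else 0)"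
    by (rule sum.swap)
  also have "\<dots> = T pg 1 m (Suc k)"
    unfolding T_def by (rule sum.cong) (auto simp: sum.delta)
  finally show ?thesis .
qed


definition Dom4 :: "nat \<Rightarrow> (nat\<times>nat\<times>nat\<times>nat) set" where
  "Dom4 n = {(a,b,c,d). 1 \<le> a \<and> a < b \<and> b < c \<and> c < d \<and> d \<le> n}"

definition arr :: "nat\<times>nat\<times>nat\<times>nat \<Rightarrow> nat \<Rightarrow> (nat\<times>nat)\<times>(nat\<times>nat)" where
  "arr t i = (case t of (a,b,c,d) \<Rightarrow>
     [((a,b),(c,d)), ((a,b),(d,c)), ((a,c),(b,d)), ((a,c),(d,b)), ((a,d),(b,c)), ((a,d),(c,b)),
      ((b,c),(a,d)), ((b,c),(d,a)), ((b,d),(a,c)), ((b,d),(c,a)), ((c,d),(a,b)), ((c,d),(b,a))] ! i)"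

definition DomE :: "nat \<Rightarrow> ((nat\<times>nat)\<times>(nat\<times>nat)) set" where
  "DomE n = {((p,q),(r,s)). 1 \<le> p \<and> p < q \<and> q \<le> n \<and> 1 \<le> r \<and> r \<le> n \<and> 1 \<le> s \<and> s \<le> n \<and>
      r \<noteq> p \<and> r \<noteq> q \<and> s \<noteq> p \<and> s \<noteq> q \<and> r \<noteq> s}"

definition H :: "(nat\<Rightarrow>nat\<Rightarrow>bool) \<Rightarrow> (nat\<times>nat)\<times>(nat\<times>nat) \<Rightarrow> bool" where
  "H pg x = (case x of ((p,q),(r,s)) \<Rightarrow> ccw pg p q r \<and> \<not> ccw pg p q s)"

lemma lt12: "i < (12::nat) \<longleftrightarrow> i = 0 \<or> i = 1 \<or> i = 2 \<or> i = 3 \<or> i = 4 \<or> i = 5 \<or> i = 6 \<or> i = 7 \<or> i = 8 \<or> i = 9 \<or> i = 10 \<or> i = 11"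
  by presburger

lemma four_term:
  assumes "a < b" "b < c" "c < d"
  shows "(\<Sum>i<12. if H pg (arr (a,b,c,d) i) then 1 else 0::nat) + (if pg a c = pg b d then 1 else 0) = 3"
  using assms
  by (simp add: numeral_eq_Suc arr_def H_def ccw_def Let_def min_def max_def) 


lemma wit: "t \<in> Dom4 n \<Longrightarrow> i < 12 \<Longrightarrow> x = arr t i \<Longrightarrow> \<exists>t\<in>Dom4 n. \<exists>i<12. x = arr t i"
  by blast

lemma arr_surj:
  assumes "x \<in> DomE n"
  shows "\<exists>t\<in>Dom4 n. \<exists>i<12. x = arr t i"
proof -
  obtain p q r s where x: "x = ((p,q),(r,s))" and c: "1 \<le> p" "p < q" "q \<le> n" "1 \<le> r" "r \<le> n" "1 \<le> s" "s \<le> n"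
      "r \<noteq> p" "r \<noteq> q" "s \<noteq> p" "s \<noteq> q" "r \<noteq> s"
    using assms unfolding DomE_def by auto
  have rc: "r<p \<or> (p<r \<and> r<q) \<or> q<r" using c by linarith
  have sc: "s<p \<or> (p<s \<and> s<q) \<or> q<s" using c by linarith
  have rs: "r<s \<or> s<r" using c by linarith
  have h00: "?thesis" if A: "r<p" and B: "s<p"
  proof -
    have ?thesis if "r<s"
        by (rule wit[of "(r,s,p,q)" _ 10]) (use c x that A B in \<open>auto simp: Dom4_def arr_def\<close>)
    moreover
    have ?thesis if "s<r"
        by (rule wit[of "(s,r,p,q)" _ 11]) (use c x that A B in \<open>auto simp: Dom4_def arr_def\<close>)
    ultimately show ?thesis using rs by blast
  qed
  have h01: "?thesis" if A: "r<p" and B: "p<s \<and> s<q"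
  proof -
    have ?thesis if "r<s"
        by (rule wit[of "(r,p,s,q)" _ 8]) (use c x that A B in \<open>auto simp: Dom4_def arr_def\<close>)
    moreover
    have ?thesis if "s<r"
        using that c A B by linarith
    ultimately show ?thesis using rs by blast
  qed
  have h02: "?thesis" if A: "r<p" and B: "q<s"
  proof -
    have ?thesis if "r<s"
        by (rule wit[of "(r,p,q,s)" _ 6]) (use c x that A B in \<open>auto simp: Dom4_def arr_def\<close>)
    moreover
    have ?thesis if "s<r"
        using that c A B by linarith
    ultimately show ?thesis using rs by blast
  qed
  have h10: "?thesis" if A: "p<r \<and> r<q" and B: "s<p"
  proof -
    have ?thesis if "r<s"
        using that c A B by linarith
    moreover
    have ?thesis if "s<r"
        by (rule wit[of "(s,p,r,q)" _ 9]) (use c x that A B in \<open>auto simp: Dom4_def arr_def\<close>)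
    ultimately show ?thesis using rs by blast
  qed
  have h11: "?thesis" if A: "p<r \<and> r<q" and B: "p<s \<and> s<q"
  proof -
    have ?thesis if "r<s"
        by (rule wit[of "(p,r,s,q)" _ 4]) (use c x that A B in \<open>auto simp: Dom4_def arr_def\<close>)
    moreover
    have ?thesis if "s<r"
        by (rule wit[of "(p,s,r,q)" _ 5]) (use c x that A B in \<open>auto simp: Dom4_def arr_def\<close>)
    ultimately show ?thesis using rs by blast
  qed
  have h12: "?thesis" if A: "p<r \<and> r<q" and B: "q<s"
  proof -
    have ?thesis if "r<s"
        by (rule wit[of "(p,r,q,s)" _ 2]) (use c x that A B in \<open>auto simp: Dom4_def arr_def\<close>)
    moreover
    have ?thesis if "s<r"
        using that c A B by linarith
    ultimately show ?thesis using rs by blast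
  qed
  have h20: "?thesis" if A: "q<r" and B: "s<p"
  proof -
    have ?thesis if "r<s"
        using that c A B by linarith
    moreover
    have ?thesis if "s<r"
        by (rule wit[of "(s,p,q,r)" _ 7]) (use c x that A B in \<open>auto simp: Dom4_def arr_def\<close>)
    ultimately show ?thesis using rs by blast
  qed
  have h21: "?thesis" if A: "q<r" and B: "p<s \<and> s<q"
  proof -
    have ?thesis if "r<s"
        using that c A B by linarith
    moreover
    have ?thesis if "s<r"
        by (rule wit[of "(p,s,q,r)" _ 3]) (use c x that A B in \<open>auto simp: Dom4_def arr_def\<close>)
    ultimately show ?thesis using rs by blast
  qed
  have h22: "?thesis" if A: "q<r" and B: "q<s"
  proof -
    have ?thesis if "r<s"
        by (rule wit[of "(p,q,r,s)" _ 0]) (use c x that A B in \<open>auto simp: Dom4_def arr_def\<close>)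
    moreover
    have ?thesis if "s<r"
        by (rule wit[of "(p,q,s,r)" _ 1]) (use c x that A B in \<open>auto simp: Dom4_def arr_def\<close>)
    ultimately show ?thesis using rs by blast
  qed
  show ?thesis using rc sc h00 h01 h02 h10 h11 h12 h20 h21 h22 by blast
qed


definition pat :: "(nat\<times>nat)\<times>(nat\<times>nat) \<Rightarrow> nat" where
  "pat x = (case x of ((p,q),(r,s)) \<Rightarrow>
    (if q<r \<and> r<s then 0 else if q<s \<and> s<r then 1 else if p<r \<and> r<q \<and> q<s then 2
     else if p<s \<and> s<q \<and> q<r then 3 else if p<r \<and> r<s \<and> s<q then 4
     else if p<s \<and> s<r \<and> r<q then 5 else if r<p \<and> q<s then 6 else if s<p \<and> q<r then 7
     else if r<p \<and> p<s \<and> s<q then 8 else if s<p \<and> p<r \<and> r<q then 9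
     else if r<s \<and> s<p then 10 else 11))"

lemma pat_arr:
  assumes "a < b" "b < c" "c < d" "i < 12"
  shows "pat (arr (a,b,c,d) i) = i"
  using assms(4) unfolding lt12
  by (elim disjE) (use assms(1-3) in \<open>simp_all add: arr_def pat_def\<close>)

lemma arr_inj_same:
  assumes "i < 12" "arr (a,b,c,d) i = arr (a',b',c',d') i"
  shows "(a,b,c,d) = (a',b',c',d')"
  using assms(1) unfolding lt12
  by (elim disjE) (use assms(2) in \<open>simp_all add: arr_def\<close>)

lemma arr_in:
  assumes "(a,b,c,d) \<in> Dom4 n" "i < 12"
  shows "arr (a,b,c,d) i \<in> DomE n"
  using assms(2) unfolding lt12
  by (elim disjE) (use assms(1) in \<open>simp_all add: arr_def Dom4_def DomE_def\<close>)

lemma arr_bij: "bij_betw (\<lambda>(t,i). arr t i) (Dom4 n \<times> {..<12}) (DomE n)"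
proof -
  have inj: "inj_on (\<lambda>(t,i). arr t i) (Dom4 n \<times> {..<12})"
  proof (rule inj_onI)
    fix x y assume x: "x \<in> Dom4 n \<times> {..<12}" and y: "y \<in> Dom4 n \<times> {..<12}"
      and e: "(\<lambda>(t,i). arr t i) x = (\<lambda>(t,i). arr t i) y"
    obtain a b c d i where xx: "x = ((a,b,c,d),i)" by (cases x) auto
    obtain a' b' c' d' i' where yy: "y = ((a',b',c',d'),i')" by (cases y) auto
    have o: "a < b" "b < c" "c < d" "a' < b'" "b' < c'" "c' < d'" "i < 12" "i' < 12"
      using x y xx yy by (auto simp: Dom4_def)
    have e2: "arr (a,b,c,d) i = arr (a',b',c',d') i'" using e xx yy by simp
    have "i = i'" using pat_arr[of a b c d i] pat_arr[of a' b' c' d' i'] o e2 by simp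
    then show "x = y" using arr_inj_same[of i a b c d a' b' c' d'] e2 o xx yy by simp
  qed
  have im1: "(\<lambda>(t,i). arr t i) ` (Dom4 n \<times> {..<12}) \<subseteq> DomE n"
    using arr_in by auto
  have im2: "DomE n \<subseteq> (\<lambda>(t,i). arr t i) ` (Dom4 n \<times> {..<12})"
  proof
    fix z assume "z \<in> DomE n"
    from arr_surj[OF this] obtain t i where "t \<in> Dom4 n" "i < 12" "z = arr t i" by blast
    then show "z \<in> (\<lambda>(t,i). arr t i) ` (Dom4 n \<times> {..<12})" by force
  qed
  show ?thesis using inj im1 im2 unfolding bij_betw_def by blast
qed


definition cnd :: "(nat\<Rightarrow>nat\<Rightarrow>bool) \<Rightarrow> nat\<times>nat\<times>nat\<times>nat \<Rightarrow> bool" where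
  "cnd pg t = (case t of (a,b,c,d) \<Rightarrow> pg a c = pg b d)"

lemma finite_Dom4[simp]: "finite (Dom4 n)"
  by (rule finite_subset[of _ "{1..n}\<times>{1..n}\<times>{1..n}\<times>{1..n}"]) (auto simp: Dom4_def)

lemma finite_DomE[simp]: "finite (DomE n)"
  by (rule finite_subset[of _ "({1..n}\<times>{1..n})\<times>({1..n}\<times>{1..n})"]) (auto simp: DomE_def)

lemma crossings_Dom4: "crossings pg n = card {t\<in>Dom4 n. cnd pg t}"
proof -
  have "{(a, b, c, d). 1 \<le> a \<and> a < c \<and> c < b \<and> b < d \<and> d \<le> n \<and> pg a b = pg c d}
     = (\<lambda>(a,b,c,d). (a,c,b,d)) ` {t\<in>Dom4 n. cnd pg t}"
  proof (rule set_eqI)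
    fix x :: "nat\<times>nat\<times>nat\<times>nat"
    obtain a b c d where x: "x = (a,b,c,d)" by (cases x) auto
    show "x \<in> {(a, b, c, d). 1 \<le> a \<and> a < c \<and> c < b \<and> b < d \<and> d \<le> n \<and> pg a b = pg c d}
     \<longleftrightarrow> x \<in> (\<lambda>(a,b,c,d). (a,c,b,d)) ` {t\<in>Dom4 n. cnd pg t}"
      unfolding x
    proof
      assume "(a, b, c, d) \<in> {(a, b, c, d). 1 \<le> a \<and> a < c \<and> c < b \<and> b < d \<and> d \<le> n \<and> pg a b = pg c d}"
      then have "(a,c,b,d) \<in> {t\<in>Dom4 n. cnd pg t}" by (auto simp: Dom4_def cnd_def)
      then show "(a, b, c, d) \<in> (\<lambda>(a,b,c,d). (a,c,b,d)) ` {t\<in>Dom4 n. cnd pg t}"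
        by (rule rev_image_eqI) simp
    qed (auto simp: Dom4_def cnd_def)
  qed
  moreover have "inj_on (\<lambda>(a,b,c,d). (a,c,b,d)) {t\<in>Dom4 n. cnd pg t}"
    by (auto simp: inj_on_def)
  ultimately show ?thesis unfolding crossings_def by (simp add: card_image)
qed

lemma sumLR: "(\<Sum>(p,q)\<in>edges 1 n. Lc pg 1 n p q * Rc pg 1 n p q) = card {x\<in>DomE n. H pg x}"
proof -
  have "(\<Sum>(p,q)\<in>edges 1 n. Lc pg 1 n p q * Rc pg 1 n p q)
      = (\<Sum>e\<in>edges 1 n. card (Ls pg 1 n (fst e) (snd e) \<times> Rs pg 1 n (fst e) (snd e)))"
    by (rule sum.cong) (auto simp: Lc_def Rc_def card_cartesian_product)
  also have "\<dots> = card (SIGMA e:edges 1 n. Ls pg 1 n (fst e) (snd e) \<times> Rs pg 1 n (fst e) (snd e))"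
    by (rule card_SigmaI[symmetric]) (auto simp: Ls_def Rs_def)
  also have "(SIGMA e:edges 1 n. Ls pg 1 n (fst e) (snd e) \<times> Rs pg 1 n (fst e) (snd e)) = {x\<in>DomE n. H pg x}"
    by (auto simp: edges_def Ls_def Rs_def DomE_def H_def)
  finally show ?thesis .
qed

lemma cross_id: "crossings pg n + (\<Sum>(p,q)\<in>edges 1 n. Lc pg 1 n p q * Rc pg 1 n p q) = 3 * card (Dom4 n)"
proof -
  have "card {x\<in>DomE n. H pg x} = (\<Sum>x\<in>DomE n. if H pg x then 1 else 0::nat)"
    by (simp add: sum.If_cases Int_def conj_commute)
  also have "\<dots> = (\<Sum>(t,i)\<in>Dom4 n \<times> {..<12}. if H pg (arr t i) then 1 else 0::nat)"
  proof -
    have r: "(\<Sum>x\<in>Dom4 n \<times> {..<12}. (\<lambda>x. if H pg x then 1 else 0::nat) ((\<lambda>(t,i). arr t i) x))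
        = (\<Sum>x\<in>DomE n. if H pg x then 1 else 0::nat)"
      by (rule sum.reindex_bij_betw[OF arr_bij])
    show ?thesis unfolding r[symmetric] by (rule sum.cong) auto
  qed
  also have "\<dots> = (\<Sum>t\<in>Dom4 n. \<Sum>i<12. if H pg (arr t i) then 1 else 0::nat)"
    by (rule sum.cartesian_product[symmetric])
  also have "\<dots> = (\<Sum>t\<in>Dom4 n. 3 - (if cnd pg t then 1 else 0::nat))"
  proof (rule sum.cong)
    fix t assume t: "t \<in> Dom4 n"
    obtain a b c d where tt: "t = (a,b,c,d)" by (cases t) auto
    show "(\<Sum>i<12. if H pg (arr t i) then 1 else 0::nat) = 3 - (if cnd pg t then 1 else 0::nat)"
      using four_term[of a b c d pg] t unfolding tt by (auto simp: Dom4_def cnd_def)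
  qed simp
  finally have A: "card {x\<in>DomE n. H pg x} = (\<Sum>t\<in>Dom4 n. 3 - (if cnd pg t then 1 else 0::nat))" .
  have B: "crossings pg n = (\<Sum>t\<in>Dom4 n. if cnd pg t then 1 else 0::nat)"
    unfolding crossings_Dom4 by (simp add: sum.If_cases Int_def conj_commute)
  have "crossings pg n + card {x\<in>DomE n. H pg x} = (\<Sum>t\<in>Dom4 n. (if cnd pg t then 1 else 0::nat) + (3 - (if cnd pg t then 1 else 0::nat)))"
    unfolding A B sum.distrib by simp
  also have "\<dots> = (\<Sum>t\<in>Dom4 n. 3)" by (rule sum.cong) auto
  finally show ?thesis unfolding sumLR by simp
qed


definition Dom3 :: "nat \<Rightarrow> (nat\<times>nat\<times>nat) set" where
  "Dom3 n = {(a,b,c). 1 \<le> a \<and> a < b \<and> b < c \<and> c \<le> n}"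

lemma card_edges: "card (edges 1 n) = n choose 2"
proof (induction n)
  case 0 
  have "edges 1 0 = {}" by (auto simp: edges_def)
  then show ?case by simp
next
  case (Suc n)
  have "card (edges 1 (Suc n)) = card (edges 1 n) + card ((\<lambda>p. (p, Suc n)) ` {1..n})"
    unfolding edges_Suc by (rule card_Un_disjoint) (auto simp: edges_def[of 1 n, symmetric], auto simp: edges_def)
  also have "card ((\<lambda>p. (p, Suc n)) ` {1..n}) = n" by (subst card_image) (auto simp: inj_on_def)
  finally show ?case using Suc binomial_Suc_Suc[of n 1] by (simp add: numeral_2_eq_2)
qed

lemma card_Dom3: "card (Dom3 n) = n choose 3"
proof (induction n)
  case 0 
  have "Dom3 0 = {}" by (auto simp: Dom3_def)
  then show ?case by (simp add: eval_nat_numeral)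
next
  case (Suc n)
  have e: "Dom3 (Suc n) = Dom3 n \<union> (\<lambda>(a,b). (a,b,Suc n)) ` edges 1 n"
  proof (rule set_eqI)
    fix x :: "nat\<times>nat\<times>nat"
    obtain a b c where x: "x = (a,b,c)" by (cases x) auto
    show "x \<in> Dom3 (Suc n) \<longleftrightarrow> x \<in> Dom3 n \<union> (\<lambda>(a,b). (a,b,Suc n)) ` edges 1 n"
      unfolding x by (cases "c = Suc n") (force simp: Dom3_def edges_def)+
  qed
  have "card (Dom3 (Suc n)) = card (Dom3 n) + card ((\<lambda>(a,b). (a,b,Suc n)) ` edges 1 n)"
  proof -
    have f3: "finite (Dom3 n)" by (rule finite_subset[of _ "{1..n}\<times>{1..n}\<times>{1..n}"]) (auto simp: Dom3_def)
    show ?thesis unfolding e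
      by (rule card_Un_disjoint[OF f3 finite_imageI[OF finite_edges]]) (auto simp: edges_def Dom3_def)
  qed
  also have "card ((\<lambda>(a,b). (a,b,Suc n)) ` edges 1 n) = n choose 2"
    by (subst card_image, force simp: inj_on_def, rule card_edges)
  finally show ?case using Suc binomial_Suc_Suc[of n 2] by (simp add: numeral_3_eq_3 numeral_2_eq_2)
qed

lemma card_Dom4: "card (Dom4 n) = n choose 4"
proof (induction n)
  case 0 
  have "Dom4 0 = {}" by (auto simp: Dom4_def)
  then show ?case by (simp add: eval_nat_numeral)
next
  case (Suc n)
  have e: "Dom4 (Suc n) = Dom4 n \<union> (\<lambda>(a,b,c). (a,b,c,Suc n)) ` Dom3 n"
  proof (rule set_eqI)
    fix x :: "nat\<times>nat\<times>nat\<times>nat"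
    obtain a b c d where x: "x = (a,b,c,d)" by (cases x) auto
    show "x \<in> Dom4 (Suc n) \<longleftrightarrow> x \<in> Dom4 n \<union> (\<lambda>(a,b,c). (a,b,c,Suc n)) ` Dom3 n"
      unfolding x by (cases "d = Suc n") (force simp: Dom3_def Dom4_def)+
  qed
  have f3: "finite (Dom3 n)" by (rule finite_subset[of _ "{1..n}\<times>{1..n}\<times>{1..n}"]) (auto simp: Dom3_def)
  have "card (Dom4 (Suc n)) = card (Dom4 n) + card ((\<lambda>(a,b,c). (a,b,c,Suc n)) ` Dom3 n)"
    unfolding e by (rule card_Un_disjoint[OF finite_Dom4 finite_imageI[OF f3]]) (auto simp: Dom3_def Dom4_def)
  also have "card ((\<lambda>(a,b,c). (a,b,c,Suc n)) ` Dom3 n) = n choose 3"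
    by (subst card_image, force simp: inj_on_def, rule card_Dom3)
  finally show ?case using Suc binomial_Suc_Suc[of n 3] by (simp add: numeral_3_eq_3 eval_nat_numeral)
qed

lemma c2: "2 * ((m+1) choose 2) = (m+1)*m"
  by (induction m) (auto simp: numeral_2_eq_2 algebra_simps)

lemma c3: "6 * ((m+2) choose 3) = (m+2)*(m+1)*m"
proof (induction m)
  case 0 then show ?case by (simp add: numeral_3_eq_3 numeral_2_eq_2)
next
  case (Suc m)
  have A: "Suc m + 2 choose 3 = (m+2 choose 2) + (m+2 choose 3)"
    using binomial_Suc_Suc[of "m+2" 2] by (simp add: numeral_3_eq_3 numeral_2_eq_2)
  have e: "m + 1 + 1 = m + 2" by simp
  have B: "2 * ((m+2) choose 2) = (m+2)*(m+1)" using c2[of "m+1"] unfolding e .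
  have poly: "3*((m+2)*(m+1)) + (m+2)*(m+1)*m = (Suc m+2)*(Suc m+1)*Suc m" by (simp add: algebra_simps)
  show ?case using A B Suc.IH poly by linarith
qed

lemma c4: "24 * ((m+3) choose 4) = (m+3)*(m+2)*(m+1)*m"
proof (induction m)
  case 0 then show ?case by (simp add: eval_nat_numeral)
next
  case (Suc m)
  have A: "Suc m + 3 choose 4 = (m+3 choose 3) + (m+3 choose 4)"
    using binomial_Suc_Suc[of "m+3" 3] by (simp add: eval_nat_numeral)
  have e: "m + 1 + 2 = m + 3" "m + 1 + 1 = m + 2" by simp_all
  have B: "6 * ((m+3) choose 3) = (m+3)*(m+2)*(m+1)" using c3[of "m+1"] unfolding e .
  have poly: "4*((m+3)*(m+2)*(m+1)) + (m+3)*(m+2)*(m+1)*m = (Suc m+3)*(Suc m+2)*(Suc m+1)*Suc m" by (simp add: algebra_simps)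
  show ?case using A B Suc.IH poly by linarith
qed

lemma sum_cubes: "4 * (\<Sum>k<(M::nat). (k+1)*(k+2)*(k+3)) = M*(M+1)*(M+2)*(M+3)"
  by (induction M) (auto simp: algebra_simps)

lemma tri_sum3: "2 * (\<Sum>k<M. Suc k - x) = (M - x) * (M + 1 - x)"
proof (induction M)
  case 0 then show ?case by simp
next
  case (Suc M)
  show ?case
  proof (cases "x \<le> M")
    case True
    then obtain d where d: "M = x + d" by (metis le_add_diff_inverse)
    show ?thesis using Suc d by (simp add: algebra_simps)
  next
    case False
    then show ?thesis using Suc by simp
  qed
qed


lemma edge_poly:
  fixes x K c :: nat
  assumes "x \<le> K" "1 \<le> c"
  shows "x*(2*K+c+1-2-x) + (K-1-x)*(K-x) + c*(K-x) = K*(2*K+c+1-2-K)"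
proof -
  obtain d where d: "K = x + d" using assms by (metis le_add_diff_inverse)
  obtain c' where c: "c = Suc c'" using assms by (cases c) auto
  show ?thesis
  proof (cases d)
    case 0 then show ?thesis using d c by simp
  next
    case (Suc e)
    then show ?thesis using d c by (simp add: algebra_simps)
  qed
qed

lemma sum_kap_id:
  assumes "4 \<le> n"
  defines "K \<equiv> n div 2 - 1"
  defines "c \<equiv> n - 1 - 2*K"
  shows "(\<Sum>(p,q)\<in>edges 1 n. Lc pg 1 n p q * Rc pg 1 n p q) + 2*(\<Sum>k<K-1. T pg 1 n (Suc k)) + c * T pg 1 n K
     = card (edges 1 n) * (K*(n-2-K))"
proof -
  have nK: "n = 2*K + c + 1" "1 \<le> c" "1 \<le> K" "c \<le> 2" unfolding c_def K_def using assms(1) by auto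
  have pe: "Lc pg 1 n p q * Rc pg 1 n p q + 2*(\<Sum>k<K-1. Suc k - kap pg 1 n p q) + c * (K - kap pg 1 n p q)
      = K*(n-2-K)" if e: "(p,q) \<in> edges 1 n" for p q
  proof -
    have s: "Lc pg 1 n p q + Rc pg 1 n p q = n - 1 - 1" using e by (intro LR_sum) (auto simp: edges_def)
    define x where "x = kap pg 1 n p q"
    have LR: "Lc pg 1 n p q * Rc pg 1 n p q = x * (n-2-x)" using s unfolding x_def kap_def min_def by auto
    have xK: "x \<le> K" using s nK unfolding x_def kap_def min_def by auto
    have t: "2*(\<Sum>k<K-1. Suc k - x) = (K-1-x)*(K-x)" using tri_sum3[where M="K-1" and x=x] nK by simp
    have "x*(2*K+c+1-2-x) + (K-1-x)*(K-x) + c*(K-x) = K*(2*K+c+1-2-K)"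
      by (rule edge_poly) (use xK nK in auto)
    then show ?thesis using LR t nK(1) unfolding x_def[symmetric] by simp
  qed
  have "(\<Sum>(p,q)\<in>edges 1 n. Lc pg 1 n p q * Rc pg 1 n p q + 2*(\<Sum>k<K-1. Suc k - kap pg 1 n p q) + c * (K - kap pg 1 n p q))
     = (\<Sum>(p,q)\<in>edges 1 n. K*(n-2-K))"
    by (rule sum.cong, simp, clarify, rule pe, assumption)
  also have "\<dots> = card (edges 1 n) * (K*(n-2-K))" by simp
  finally have A: "(\<Sum>(p,q)\<in>edges 1 n. Lc pg 1 n p q * Rc pg 1 n p q + 2*(\<Sum>k<K-1. Suc k - kap pg 1 n p q) + c * (K - kap pg 1 n p q))
     = card (edges 1 n) * (K*(n-2-K))" .
  have B: "(\<Sum>(p,q)\<in>edges 1 n. (\<Sum>k<K-1. Suc k - kap pg 1 n p q)) = (\<Sum>k<K-1. T pg 1 n (Suc k))"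
    unfolding T_def by (subst sum.swap) (simp add: case_prod_beta)
  have C: "(\<Sum>(p,q)\<in>edges 1 n. (K - kap pg 1 n p q)) = T pg 1 n K" unfolding T_def by simp
  have D: "(\<Sum>(p,q)\<in>edges 1 n. Lc pg 1 n p q * Rc pg 1 n p q + 2*(\<Sum>k<K-1. Suc k - kap pg 1 n p q) + c * (K - kap pg 1 n p q))
     = (\<Sum>(p,q)\<in>edges 1 n. Lc pg 1 n p q * Rc pg 1 n p q) + 2*(\<Sum>(p,q)\<in>edges 1 n. (\<Sum>k<K-1. Suc k - kap pg 1 n p q))
       + c * (\<Sum>(p,q)\<in>edges 1 n. (K - kap pg 1 n p q))"
    by (simp add: sum.distrib sum_distrib_left case_prod_beta)
  show ?thesis using A unfolding D B C .
qed


lemma poly_id: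
  fixes n :: nat
  assumes "4 \<le> n"
  defines "K \<equiv> n div 2 - 1"
  defines "c \<equiv> n - 1 - 2*K"
  defines "P \<equiv> (n div 2)*((n-1) div 2)*((n-2) div 2)*((n-3) div 2)"
  shows "2*P + 4*(n*(n-1))*(K*(n-2-K)) = n*(n-1)*(n-2)*(n-3) + 2*((K-1)*K*(K+1)*(K+2)) + 4*c*(K*(K+1)*(K+2))"
proof -
  define t where "t = (n - 4) div 2"
  have "n = 2*t+4 \<or> n = 2*t+5" using assms(1) unfolding t_def by presburger
  then show ?thesis
  proof
    assume n: "n = 2*t+4"
    have d: "n div 2 = t+2" "(n-1) div 2 = t+1" "(n-2) div 2 = t+1" "(n-3) div 2 = t"
      "n - 1 = 2*t+3" "n-2 = 2*t+2" "n-3 = 2*t+1" using n by presburger+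
    have k: "K = t+1" "c = 1" "n-2-K = t+1" "K - 1 = t" unfolding c_def K_def using n by presburger+
    show ?thesis unfolding P_def d k unfolding n by (simp add: algebra_simps)
  next
    assume n: "n = 2*t+5"
    have d: "n div 2 = t+2" "(n-1) div 2 = t+2" "(n-2) div 2 = t+1" "(n-3) div 2 = t+1"
      "n - 1 = 2*t+4" "n-2 = 2*t+3" "n-3 = 2*t+2" using n by presburger+
    have k: "K = t+1" "c = 2" "n-2-K = t+2" "K - 1 = t" unfolding c_def K_def using n by presburger+
    show ?thesis unfolding P_def d k unfolding n by (simp add: algebra_simps)
  qed
qed

lemma lin_help:
  fixes cr SLR C4 S TK c C2 F :: nat
  assumes "cr + SLR = 3*C4" "SLR + 2*S + c*TK = C2*F"
  shows "2*(4*cr) + 4*(2*C2)*F = 24*C4 + 8*(2*S) + 8*(c*TK)"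
proof -
  have "4*(2*C2)*F = 8*(C2*F)" by simp
  then show ?thesis using assms by linarith
qed

lemma opt_T:
  assumes "crossing_optimal pg n" "4 \<le> n" "k + 2 \<le> n div 2"
  shows "2 * T pg 1 n (Suc k) = (k+1)*(k+2)*(k+3)"
proof -
  define K where "K = n div 2 - 1"
  define c where "c = n - 1 - 2*K"
  define P where "P = (n div 2)*((n-1) div 2)*((n-2) div 2)*((n-3) div 2)"
  define cr where "cr = crossings pg n"
  define SLR where "SLR = (\<Sum>(p,q)\<in>edges 1 n. Lc pg 1 n p q * Rc pg 1 n p q)"
  define Tm where "Tm = (\<lambda>k::nat. (k+1)*(k+2)*(k+3))"
  have nK: "1 \<le> c" "1 \<le> K" unfolding c_def K_def using assms(2) by auto
  have "real cr = (1/4) * real P" using assms(1) unfolding crossing_optimal_def Z_def cr_def P_def by simp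
  then have crP: "4 * cr = P" by linarith
  have ci: "cr + SLR = 3 * (n choose 4)" using cross_id[of pg n] unfolding cr_def SLR_def card_Dom4 .
  have sk: "SLR + 2*(\<Sum>k<K-1. T pg 1 n (Suc k)) + c * T pg 1 n K = (n choose 2) * (K*(n-2-K))"
    using sum_kap_id[OF assms(2), of pg] unfolding SLR_def K_def c_def card_edges .
  have pid: "2*P + 4*(n*(n-1))*(K*(n-2-K)) = n*(n-1)*(n-2)*(n-3) + 2*((K-1)*K*(K+1)*(K+2)) + 4*c*(K*(K+1)*(K+2))"
    using poly_id[OF assms(2)] unfolding K_def c_def P_def .
  define m where "m = n - 3"
  have m: "n = m + 3" using assms(2) unfolding m_def by simp
  have C4: "24 * (n choose 4) = n*(n-1)*(n-2)*(n-3)" using c4[of m] unfolding m by (simp add: algebra_simps)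
  define m' where "m' = n - 1"
  have m': "n = m' + 1" using assms(2) unfolding m'_def by simp
  have C2: "2 * (n choose 2) = n*(n-1)" using c2[of m'] unfolding m' by simp
  have sc: "4 * (\<Sum>k<K-1. Tm k) = (K-1)*K*(K+1)*(K+2)"
    using sum_cubes[of "K-1"] nK unfolding Tm_def by (simp add: algebra_simps)
  have TmK: "Tm (K-1) = K*(K+1)*(K+2)" unfolding Tm_def using nK by (simp add: algebra_simps)
  define S1 where "S1 = (\<Sum>k<K-1. 2 * T pg 1 n (Suc k))"
  define S2 where "S2 = (\<Sum>k<K-1. Tm k)"
  have lb: "Tm k \<le> 2 * T pg 1 n (Suc k)" if "k \<le> K - 1" for k
    unfolding Tm_def by (rule lower_bound) (use that assms(2) K_def in auto)
  have S12: "S2 \<le> S1" unfolding S1_def S2_def by (rule sum_mono) (use lb in auto)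
  have KK: "Suc (K-1) = K" using nK by simp
  have lbK: "Tm (K-1) \<le> 2 * T pg 1 n K" using lb[of "K-1"] KK by simp
  have key: "8 * S1 + 4 * c * (2 * T pg 1 n K) = 8 * S2 + 4 * c * Tm (K-1)"
  proof -
    have e1: "2 * (\<Sum>k<K-1. T pg 1 n (Suc k)) = S1" unfolding S1_def by (simp add: sum_distrib_left)
    have "2*(4*cr) + 4*(2*(n choose 2))*(K*(n-2-K)) = 24 * (n choose 4) + 8*(2*(\<Sum>k<K-1. T pg 1 n (Suc k))) + 8*(c*T pg 1 n K)"
      by (rule lin_help[OF ci sk])
    then have "2*P + 4*(n*(n-1))*(K*(n-2-K)) = 24 * (n choose 4) + 8*S1 + 8*(c*T pg 1 n K)"
      unfolding crP C2 e1 .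
    then have "n*(n-1)*(n-2)*(n-3) + 2*((K-1)*K*(K+1)*(K+2)) + 4*c*(K*(K+1)*(K+2)) = n*(n-1)*(n-2)*(n-3) + 8*S1 + 8*(c*T pg 1 n K)"
      unfolding pid C4 .
    then have "2*(4*S2) + 4*c*Tm (K-1) = 8*S1 + 8*(c*T pg 1 n K)"
      unfolding S2_def sc TmK by simp
    then show ?thesis by (simp add: algebra_simps)
  qed
  have eqK: "2 * T pg 1 n K = Tm (K-1)" and eqS: "S1 = S2"
  proof -
    have "4 * c * Tm (K-1) \<le> 4 * c * (2 * T pg 1 n K)" using lbK by simp
    then show "S1 = S2" using key S12 by linarith
    have "4 * c * (2 * T pg 1 n K) = 4 * c * Tm (K-1)" using key S12 \<open>S1 = S2\<close> by linarith
    then show "2 * T pg 1 n K = Tm (K-1)" using nK by simp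
  qed
  have each: "2 * T pg 1 n (Suc k) = Tm k" if "k < K - 1" for k
  proof -
    have "(\<Sum>k<K-1. 2 * T pg 1 n (Suc k) - Tm k) = S1 - S2"
      unfolding S1_def S2_def by (rule sum_subtractf_nat) (use lb in auto)
    then have "(\<Sum>k<K-1. 2 * T pg 1 n (Suc k) - Tm k) = 0" using eqS by simp
    then have "2 * T pg 1 n (Suc k) - Tm k = 0" using that by simp
    then show ?thesis using lb[of k] that by simp
  qed
  show ?thesis
  proof (cases "k < K - 1")
    case True then show ?thesis using each[OF True] unfolding Tm_def by simp
  next
    case False
    then have "k = K - 1" using assms(3) unfolding K_def by auto
    then show ?thesis using eqK KK unfolding Tm_def by simp
  qed
qed

theorem lemma11:
  fixes pg :: "nat \<Rightarrow> nat \<Rightarrow> bool" and n j k :: nat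
  assumes "normalized pg n"
    and "crossing_optimal pg n"
    and "j + 2 \<le> n div 2"
    and "k + j + 2 \<le> n div 2"
  shows "E_le_le pg (n - j) k = 3 * ((k + 3) choose 3)"
proof -
  have n4: "4 \<le> n" using assms(3) by auto
  have "2 * T pg 1 (n-j) (Suc k) = (k+1)*(k+2)*(k+3)"
    by (rule chain[where j=j]) (use opt_T[OF assms(2) n4] assms(4) in auto)
  moreover have "E_le_le pg (n - j) k = T pg 1 (n-j) (Suc k)" by (rule EL_T) (use assms(4) in auto)
  moreover have "6 * ((k+3) choose 3) = (k+1)*(k+2)*(k+3)"
  proof -
    have e: "k+1+2 = k+3" "k+1+1 = k+2" by simp_all
    have "6 * ((k+3) choose 3) = (k+3)*(k+2)*(k+1)" using c3[of "k+1"] unfolding e .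
    moreover have "(k+3)*(k+2)*(k+1) = (k+1)*(k+2)*(k+3)" by (simp add: algebra_simps)
    ultimately show ?thesis by simp
  qed
  ultimately show ?thesis by linarith
qed

end
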